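(* Let $T$ be a finite graph such that every graph homomorphism $T\to T$ is an automorphism (i.e. $\mathrm{End}(T)=\mathrm{Aut}(T)$). If there is a path component of $\mathrm{Hom}(T,K_{\chi(T)})$ which is invariant under the action of $\mathrm{Aut}(T)$ (acting by $f\mapsto f\circ\gamma$), then there exists a graph $G$ with $\chi(G)=\chi(T)$ such that $\mathrm{Hom}(T,G)$ is non-empty and connected.
   Context: Graphs are pairs $(V(G),E(G))$ with $E(G)\subseteq V(G)\times V(G)$ a symmetric relation (loops allowed); a graph homomorphism $f\colon G\to H$ is a map $V(G)\to V(H)$ with $(f(u),f(v))\in E(H)$ for all $(u,v)\in E(G)$. $K_r$ is the complete graph on $r$ vertices without loops, $\chi$ the chromatic number. For graphs $T,G$, $\mathrm{Hom}(T,G)$ is a cell complex whose vertices are the graph homomorphisms $T\to G$, and two homomorphisms are joined by an edge if and only if they differ at exactly one vertex of $T$; path components and connectedness may be computed in the graph formed by these vertices and edges; "connected" means non-empty and path-connected. *)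

theory Defs
  imports "HOL-Library.FuncSet" "HOL-Library.Extended_Nat"
begin

text \<open>A graph is a pair (V, E) with E a symmetric relation on V (loops allowed).\<close>
type_synonym 'a graph = "'a set \<times> ('a \<times> 'a) set"

definition verts :: "'a graph \<Rightarrow> 'a set" where "verts G = fst G"
definition edges :: "'a graph \<Rightarrow> ('a \<times> 'a) set" where "edges G = snd G"

definition wf_graph :: "'a graph \<Rightarrow> bool" where
  "wf_graph G \<longleftrightarrow> edges G \<subseteq> verts G \<times> verts G \<and> sym (edges G)"

text \<open>Graph homomorphisms, as maps on the vertex set (values outside V(T) irrelevant).\<close>
definition graph_hom :: "'a graph \<Rightarrow> 'b graph \<Rightarrow> ('a \<Rightarrow> 'b) \<Rightarrow> bool" where
  "graph_hom T G f \<longleftrightarrow> (\<forall>x\<in>verts T. f x \<in> verts G) \<and>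
     (\<forall>(u,v)\<in>edges T. (f u, f v) \<in> edges G)"

definition graph_aut :: "'a graph \<Rightarrow> ('a \<Rightarrow> 'a) \<Rightarrow> bool" where
  "graph_aut T g \<longleftrightarrow> graph_hom T T g \<and> bij_betw g (verts T) (verts T) \<and>
     (\<forall>u\<in>verts T. \<forall>v\<in>verts T. (g u, g v) \<in> edges T \<longrightarrow> (u, v) \<in> edges T)"

definition complete_graph :: "nat \<Rightarrow> nat graph" where
  "complete_graph r = ({0..<r}, {(i,j). i < r \<and> j < r \<and> i \<noteq> j})"

text \<open>Chromatic number (infinite if no proper colouring with finitely many colours exists).\<close>
definition chromatic_number :: "'a graph \<Rightarrow> enat" where
  "chromatic_number G = (INF k \<in> {k. \<exists>f. graph_hom G (complete_graph k) f}. enat k)"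

text \<open>Vertices of Hom(T,G): homomorphisms, represented canonically as extensional maps on V(T).\<close>
definition hom_vertices :: "'a graph \<Rightarrow> 'b graph \<Rightarrow> ('a \<Rightarrow> 'b) set" where
  "hom_vertices T G = {f. f \<in> extensional (verts T) \<and> graph_hom T G f}"

text \<open>Edges of the 1-skeleton of Hom(T,G): homomorphisms differing at exactly one vertex of T.\<close>
definition hom_adj :: "'a graph \<Rightarrow> 'b graph \<Rightarrow> (('a \<Rightarrow> 'b) \<times> ('a \<Rightarrow> 'b)) set" where
  "hom_adj T G = {(f,g). f \<in> hom_vertices T G \<and> g \<in> hom_vertices T G \<and>
      card {x \<in> verts T. f x \<noteq> g x} = 1}"

definition hom_path_component :: "'a graph \<Rightarrow> 'b graph \<Rightarrow> ('a \<Rightarrow> 'b) set \<Rightarrow> bool" where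
  "hom_path_component T G C \<longleftrightarrow>
     (\<exists>f \<in> hom_vertices T G. C = {g. (f, g) \<in> (hom_adj T G)\<^sup>*})"

definition hom_connected :: "'a graph \<Rightarrow> 'b graph \<Rightarrow> bool" where
  "hom_connected T G \<longleftrightarrow> hom_vertices T G \<noteq> {} \<and>
     (\<forall>f \<in> hom_vertices T G. \<forall>g \<in> hom_vertices T G. (f, g) \<in> (hom_adj T G)\<^sup>*)"

definition aut_invariant :: "'a graph \<Rightarrow> ('a \<Rightarrow> 'b) set \<Rightarrow> bool" where
  "aut_invariant T C \<longleftrightarrow>
     (\<forall>\<gamma>. graph_aut T \<gamma> \<longrightarrow> (\<forall>f \<in> C. restrict (f \<circ> \<gamma>) (verts T) \<in> C))"

end

theory Submission
  imports Defs
begin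

lemma graph_hom_comp:
  "graph_hom A B h \<Longrightarrow> graph_hom B C f \<Longrightarrow> graph_hom A C (f \<circ> h)"
  unfolding graph_hom_def by fastforce

lemma chromatic_mono:
  assumes "graph_hom A B h"
  shows "chromatic_number A \<le> chromatic_number B"
  unfolding chromatic_number_def
proof (rule INF_superset_mono)
  show "{k. \<exists>f. graph_hom B (complete_graph k) f} \<subseteq> {k. \<exists>f. graph_hom A (complete_graph k) f}"
    using graph_hom_comp[OF assms] by blast
qed simp

lemma chromatic_le:
  "graph_hom A (complete_graph r) f \<Longrightarrow> chromatic_number A \<le> enat r"
  unfolding chromatic_number_def by (rule INF_lower) auto

lemma sym_hom_adj: "sym (hom_adj T G)"
proof -
  have e: "\<And>f g. {x \<in> verts T. f x \<noteq> g x} = {x \<in> verts T. g x \<noteq> f x}" by auto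
  show ?thesis
  proof (rule symI)
    fix a b assume "(a,b) \<in> hom_adj T G"
    then show "(b,a) \<in> hom_adj T G" unfolding hom_adj_def using e[of b a] by auto
  qed
qed

definition mixf :: "'a set \<Rightarrow> 'a set \<Rightarrow> ('a \<Rightarrow> 'b) \<Rightarrow> ('a \<Rightarrow> 'b) \<Rightarrow> 'a \<Rightarrow> 'b" where
  "mixf V S g g' = restrict (\<lambda>x. if x \<in> S then g' x else g x) V"

lemma mixing_path_aux:
  assumes fin: "finite (verts T)"
  shows "\<And>g g'. card {x \<in> verts T. g x \<noteq> g' x} = n \<Longrightarrow>
    g \<in> extensional (verts T) \<Longrightarrow> g' \<in> extensional (verts T) \<Longrightarrow>
    (\<forall>S. mixf (verts T) S g g' \<in> hom_vertices T G) \<Longrightarrow> (g, g') \<in> (hom_adj T G)\<^sup>*"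
proof (induction n)
  case 0
  then have "{x \<in> verts T. g x \<noteq> g' x} = {}" using fin by simp
  then have "\<forall>x\<in>verts T. g x = g' x" by blast
  then show ?case using 0(2,3) extensionalityI[of g "verts T" g'] by simp
next
  case (Suc n)
  let ?D = "{x \<in> verts T. g x \<noteq> g' x}"
  obtain z where z: "z \<in> ?D" using Suc.prems(1) by (metis card.empty empty_iff nat.distinct(1) subsetI subset_antisym)
  define g1 where "g1 = mixf (verts T) {z} g g'"
  have g1ext: "g1 \<in> extensional (verts T)" unfolding g1_def mixf_def by simp
  have D1: "{x \<in> verts T. g1 x \<noteq> g' x} = ?D - {z}"
    using z by (auto simp: g1_def mixf_def)
  have D2: "{x \<in> verts T. g x \<noteq> g1 x} = {z}"
    using z by (auto simp: g1_def mixf_def)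
  have "g \<in> hom_vertices T G"
  proof -
    have "mixf (verts T) {} g g' = g" using Suc.prems(2) by (auto simp: mixf_def extensional_def fun_eq_iff)
    then show ?thesis using Suc.prems(4) by metis
  qed
  moreover have "g1 \<in> hom_vertices T G" using Suc.prems(4) g1_def by simp
  ultimately have step: "(g, g1) \<in> hom_adj T G" unfolding hom_adj_def using D2 by simp
  have mix1: "\<forall>S. mixf (verts T) S g1 g' \<in> hom_vertices T G"
  proof
    fix S
    have "mixf (verts T) S g1 g' = mixf (verts T) (S \<union> {z}) g g'"
      by (auto simp: mixf_def g1_def fun_eq_iff)
    then show "mixf (verts T) S g1 g' \<in> hom_vertices T G" using Suc.prems(4) by simp
  qed
  have "card {x \<in> verts T. g1 x \<noteq> g' x} = n" using D1 z Suc.prems(1) fin by simp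
  then have "(g1, g') \<in> (hom_adj T G)\<^sup>*" using Suc.IH g1ext Suc.prems(3) mix1 by blast
  then show ?case using step by (meson converse_rtrancl_into_rtrancl)
qed

lemma mixing_path:
  assumes "finite (verts T)" "g \<in> extensional (verts T)" "g' \<in> extensional (verts T)"
    "\<And>S. mixf (verts T) S g g' \<in> hom_vertices T G"
  shows "(g, g') \<in> (hom_adj T G)\<^sup>*"
  using mixing_path_aux[OF assms(1) refl assms(2,3)] assms(4) by blast

lemma hom_restrict:
  assumes "wf_graph T" "graph_hom T G f"
  shows "restrict f (verts T) \<in> hom_vertices T G"
proof -
  have "edges T \<subseteq> verts T \<times> verts T" using assms(1) by (simp add: wf_graph_def)
  then show ?thesis using assms(2) unfolding hom_vertices_def graph_hom_def by auto
qed

lemma rename_graph: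
  fixes G :: "'b graph" and T :: "'a graph" and \<phi> :: "'b \<Rightarrow> nat"
  assumes wfT: "wf_graph T" and wf: "wf_graph G" and inj: "inj_on \<phi> (verts G)"
    and H: "H = (\<phi> ` verts G, (\<lambda>(a,b). (\<phi> a, \<phi> b)) ` edges G)"
  shows "wf_graph H \<and> chromatic_number H = chromatic_number G \<and> (hom_connected T G \<longrightarrow> hom_connected T H)"
proof -
  have vH: "verts H = \<phi> ` verts G" and eH: "edges H = (\<lambda>(a,b). (\<phi> a, \<phi> b)) ` edges G"
    using H by (auto simp: verts_def edges_def)
  have EG: "edges G \<subseteq> verts G \<times> verts G" "sym (edges G)" using wf unfolding wf_graph_def by auto
  have wfH: "wf_graph H" unfolding wf_graph_def
  proof
    show "edges H \<subseteq> verts H \<times> verts H" using EG(1) vH eH by auto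
    show "sym (edges H)" unfolding eH using EG(2)
      by (auto simp: sym_def)
  qed
  define \<psi> where "\<psi> = inv_into (verts G) \<phi>"
  have psi: "\<And>a. a \<in> verts G \<Longrightarrow> \<psi> (\<phi> a) = a" unfolding \<psi>_def using inj by simp
  have h1: "graph_hom G H \<phi>" unfolding graph_hom_def vH eH by auto
  have h2: "graph_hom H G \<psi>" unfolding graph_hom_def vH eH
  proof safe
    fix a assume "a \<in> verts G" then show "\<psi> (\<phi> a) \<in> verts G" using psi by simp
  next
    fix a b assume ab: "(a,b) \<in> edges G"
    then have "a \<in> verts G" "b \<in> verts G" using EG(1) by auto
    then show "(\<psi> (\<phi> a), \<psi> (\<phi> b)) \<in> edges G" using psi ab by simp
  qed
  have chi: "chromatic_number H = chromatic_number G"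
    using chromatic_mono[OF h1] chromatic_mono[OF h2] by (rule antisym[rotated])
  have conn: "hom_connected T H" if hc: "hom_connected T G"
  proof -
    define \<Phi> where "\<Phi> = (\<lambda>g. restrict (\<phi> \<circ> g) (verts T))"
    have Phi_hom: "\<Phi> g \<in> hom_vertices T H" if "g \<in> hom_vertices T G" for g
    proof -
      have "graph_hom T H (\<phi> \<circ> g)" using graph_hom_comp[OF _ h1, of T g] that by (simp add: hom_vertices_def)
      then show ?thesis unfolding \<Phi>_def by (rule hom_restrict[OF wfT])
    qed
    have Phi_adj: "(\<Phi> a, \<Phi> b) \<in> hom_adj T H" if "(a, b) \<in> hom_adj T G" for a b
    proof -
      have a: "a \<in> hom_vertices T G" and b: "b \<in> hom_vertices T G"
        and c: "card {x \<in> verts T. a x \<noteq> b x} = 1" using that by (auto simp: hom_adj_def)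
      have "{x \<in> verts T. \<Phi> a x \<noteq> \<Phi> b x} = {x \<in> verts T. a x \<noteq> b x}"
      proof -
        have "\<And>x. x \<in> verts T \<Longrightarrow> (\<phi> (a x) = \<phi> (b x)) = (a x = b x)"
        proof -
          fix x assume x: "x \<in> verts T"
          then have "a x \<in> verts G" "b x \<in> verts G" using a b unfolding hom_vertices_def graph_hom_def by auto
          then show "(\<phi> (a x) = \<phi> (b x)) = (a x = b x)" using inj unfolding inj_on_def by auto
        qed
        then show ?thesis unfolding \<Phi>_def by auto
      qed
      then show ?thesis using Phi_hom[OF a] Phi_hom[OF b] c by (simp add: hom_adj_def)
    qed
    have Phi_rt: "(\<Phi> a, \<Phi> b) \<in> (hom_adj T H)\<^sup>*" if "(a, b) \<in> (hom_adj T G)\<^sup>*" for a b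
      using that
    proof (induction rule: rtrancl_induct)
      case base then show ?case by simp
    next
      case (step y z) then show ?case using Phi_adj by (meson rtrancl_into_rtrancl)
    qed
    have surj: "\<exists>g \<in> hom_vertices T G. h = \<Phi> g" if "h \<in> hom_vertices T H" for h
    proof -
      define g where "g = restrict (\<psi> \<circ> h) (verts T)"
      have hh: "graph_hom T H h" "h \<in> extensional (verts T)" using that by (auto simp: hom_vertices_def)
      have "graph_hom T G (\<psi> \<circ> h)" using graph_hom_comp[OF hh(1) h2] .
      then have "g \<in> hom_vertices T G" unfolding g_def by (rule hom_restrict[OF wfT])
      moreover have "h = \<Phi> g"
      proof (rule extensionalityI[OF hh(2)])
        show "\<Phi> g \<in> extensional (verts T)" unfolding \<Phi>_def by simp
        fix x assume x: "x \<in> verts T"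
        then have "h x \<in> \<phi> ` verts G" using hh(1) vH unfolding graph_hom_def by auto
        then obtain a where "a \<in> verts G" "h x = \<phi> a" by auto
        then show "h x = \<Phi> g x" unfolding \<Phi>_def g_def using x psi by simp
      qed
      ultimately show ?thesis by blast
    qed
    show ?thesis unfolding hom_connected_def
    proof
      obtain g0 where "g0 \<in> hom_vertices T G" using hc unfolding hom_connected_def by blast
      then show "hom_vertices T H \<noteq> {}" using Phi_hom by blast
      show "\<forall>f\<in>hom_vertices T H. \<forall>g\<in>hom_vertices T H. (f, g) \<in> (hom_adj T H)\<^sup>*"
      proof (intro ballI)
        fix f g assume "f \<in> hom_vertices T H" "g \<in> hom_vertices T H"
        then obtain f' g' where "f' \<in> hom_vertices T G" "g' \<in> hom_vertices T G" "f = \<Phi> f'" "g = \<Phi> g'"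
          using surj by metis
        then show "(f, g) \<in> (hom_adj T H)\<^sup>*" using hc Phi_rt unfolding hom_connected_def by blast
      qed
    qed
  qed
  show ?thesis using wfH chi conn by blast
qed

definition autset :: "'a graph \<Rightarrow> ('a \<Rightarrow> 'a) set" where
  "autset T = {\<sigma>. \<sigma> \<in> extensional (verts T) \<and> graph_aut T \<sigma>}"

type_synonym 'a bv = "'a \<times> (('a \<Rightarrow> 'a) \<times> nat) option"

definition bverts :: "'a graph \<Rightarrow> nat \<Rightarrow> 'a bv set" where
  "bverts T M = verts T \<times> ({None} \<union> Some ` (autset T \<times> {1..<M}))"

definition badj :: "'a graph \<Rightarrow> nat \<Rightarrow> 'a bv \<Rightarrow> 'a bv \<Rightarrow> bool" where
  "badj T M p q \<longleftrightarrow>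
    (\<exists>u v. p = (u, None) \<and> q = (v, None) \<and> (u, v) \<in> edges T) \<or>
    (\<exists>u v \<sigma> i j. p = (u, Some (\<sigma>, i)) \<and> q = (v, Some (\<sigma>, j)) \<and> (u, v) \<in> edges T \<and> \<sigma> \<in> autset T
        \<and> 1 \<le> i \<and> i < M \<and> 1 \<le> j \<and> j < M \<and> i \<le> Suc j \<and> j \<le> Suc i) \<or>
    (\<exists>u v \<sigma>. p = (u, None) \<and> q = (v, Some (\<sigma>, 1)) \<and> (u, v) \<in> edges T \<and> \<sigma> \<in> autset T \<and> 1 < M) \<or>
    (\<exists>u v \<sigma>. p = (v, Some (\<sigma>, 1)) \<and> q = (u, None) \<and> (u, v) \<in> edges T \<and> \<sigma> \<in> autset T \<and> 1 < M) \<or>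
    (\<exists>u v \<sigma>. p = (u, Some (\<sigma>, M - 1)) \<and> q = (\<sigma> v, None) \<and> (u, v) \<in> edges T \<and> \<sigma> \<in> autset T \<and> 1 < M) \<or>
    (\<exists>u v \<sigma>. p = (\<sigma> v, None) \<and> q = (u, Some (\<sigma>, M - 1)) \<and> (u, v) \<in> edges T \<and> \<sigma> \<in> autset T \<and> 1 < M)"

definition bgraph :: "'a graph \<Rightarrow> nat \<Rightarrow> 'a bv graph" where
  "bgraph T M = (bverts T M, {(p, q). badj T M p q})"

definition mv :: "nat \<Rightarrow> (('a \<Rightarrow> 'a) \<Rightarrow> nat) \<Rightarrow> nat \<Rightarrow> 'a bv \<Rightarrow> 'a bv" where
  "mv M c t p = (case p of (u, None) \<Rightarrow> (u, None)
     | (u, Some (\<sigma>, i)) \<Rightarrow>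
        (if i < c \<sigma> then (if min i t = 0 then (u, None) else (u, Some (\<sigma>, min i t)))
         else (if min (M - i) t = 0 then (\<sigma> u, None) else (u, Some (\<sigma>, M - min (M - i) t)))))"

lemma autset_hom: "\<sigma> \<in> autset T \<Longrightarrow> (u, v) \<in> edges T \<Longrightarrow> (\<sigma> u, \<sigma> v) \<in> edges T"
  unfolding autset_def graph_aut_def graph_hom_def by auto

lemma autset_vert: "\<sigma> \<in> autset T \<Longrightarrow> u \<in> verts T \<Longrightarrow> \<sigma> u \<in> verts T"
  unfolding autset_def graph_aut_def graph_hom_def by auto

lemma sym_edgesT: "wf_graph T \<Longrightarrow> (u, v) \<in> edges T \<Longrightarrow> (v, u) \<in> edges T"
  unfolding wf_graph_def sym_def by blast

lemma badj_hh: "(u, v) \<in> edges T \<Longrightarrow> badj T M (u, None) (v, None)"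
  unfolding badj_def by (rule disjI1) simp
lemma badj_ll: "(u, v) \<in> edges T \<Longrightarrow> \<sigma> \<in> autset T \<Longrightarrow> 1 \<le> i \<Longrightarrow> i < M \<Longrightarrow> 1 \<le> j \<Longrightarrow> j < M
   \<Longrightarrow> i \<le> Suc j \<Longrightarrow> j \<le> Suc i \<Longrightarrow> badj T M (u, Some (\<sigma>, i)) (v, Some (\<sigma>, j))"
  unfolding badj_def by (rule disjI2, rule disjI1) auto
lemma badj_h1: "(u, v) \<in> edges T \<Longrightarrow> \<sigma> \<in> autset T \<Longrightarrow> 1 < M \<Longrightarrow> badj T M (u, None) (v, Some (\<sigma>, 1))"
  unfolding badj_def by (rule disjI2, rule disjI2, rule disjI1) simp
lemma badj_1h: "(u, v) \<in> edges T \<Longrightarrow> \<sigma> \<in> autset T \<Longrightarrow> 1 < M \<Longrightarrow> badj T M (v, Some (\<sigma>, 1)) (u, None)"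
  unfolding badj_def by (rule disjI2, rule disjI2, rule disjI2, rule disjI1) simp
lemma badj_Mh: "(u, v) \<in> edges T \<Longrightarrow> \<sigma> \<in> autset T \<Longrightarrow> 1 < M \<Longrightarrow> badj T M (u, Some (\<sigma>, M - 1)) (\<sigma> v, None)"
  unfolding badj_def by (rule disjI2, rule disjI2, rule disjI2, rule disjI2, rule disjI1) blast
lemma badj_hM: "(u, v) \<in> edges T \<Longrightarrow> \<sigma> \<in> autset T \<Longrightarrow> 1 < M \<Longrightarrow> badj T M (\<sigma> v, None) (u, Some (\<sigma>, M - 1))"
  unfolding badj_def by (rule disjI2, rule disjI2, rule disjI2, rule disjI2, rule disjI2) blast

lemma badj_h1': "(u, v) \<in> edges T \<Longrightarrow> \<sigma> \<in> autset T \<Longrightarrow> Suc 0 < M \<Longrightarrow> badj T M (u, None) (v, Some (\<sigma>, Suc 0))"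
  using badj_h1 by simp
lemma badj_1h': "(u, v) \<in> edges T \<Longrightarrow> \<sigma> \<in> autset T \<Longrightarrow> Suc 0 < M \<Longrightarrow> badj T M (v, Some (\<sigma>, Suc 0)) (u, None)"
  using badj_1h by simp
lemma badj_Mh': "(u, v) \<in> edges T \<Longrightarrow> \<sigma> \<in> autset T \<Longrightarrow> Suc 0 < M \<Longrightarrow> badj T M (u, Some (\<sigma>, M - Suc 0)) (\<sigma> v, None)"
  using badj_Mh by simp
lemma badj_hM': "(u, v) \<in> edges T \<Longrightarrow> \<sigma> \<in> autset T \<Longrightarrow> Suc 0 < M \<Longrightarrow> badj T M (\<sigma> v, None) (u, Some (\<sigma>, M - Suc 0))"
  using badj_hM by simp

lemma min_close: "i \<le> Suc j \<Longrightarrow> j \<le> Suc i \<Longrightarrow> s \<le> Suc t \<Longrightarrow> t \<le> Suc s \<Longrightarrow>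
  min i s \<le> Suc (min j t) \<and> min j t \<le> Suc (min i s)"
  by (simp add: min_def)

lemma mv_lower: "i < c \<sigma> \<Longrightarrow> mv M c t (u, Some (\<sigma>, i)) =
   (if min i t = 0 then (u, None) else (u, Some (\<sigma>, min i t)))"
  by (simp add: mv_def)
lemma mv_upper: "\<not> i < c \<sigma> \<Longrightarrow> mv M c t (u, Some (\<sigma>, i)) =
   (if min (M - i) t = 0 then (\<sigma> u, None) else (u, Some (\<sigma>, M - min (M - i) t)))"
  by (simp add: mv_def)
lemma mv_hub: "mv M c t (u, None) = (u, None)"
  by (simp add: mv_def)

lemma mv_adj:
  assumes wf: "wf_graph T" and pq: "badj T M p q"
    and c: "\<And>\<sigma>. 1 \<le> c \<sigma> \<and> c \<sigma> < M"
    and np: "\<And>\<sigma>. snd p \<noteq> Some (\<sigma>, c \<sigma>)" and nq: "\<And>\<sigma>. snd q \<noteq> Some (\<sigma>, c \<sigma>)"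
    and st: "s \<le> Suc t" "t \<le> Suc s"
  shows "badj T M (mv M c s p) (mv M c t q)"
  using pq unfolding badj_def[of T M p q]
proof (elim disjE exE conjE)
  fix u v assume "p = (u, None)" "q = (v, None)" "(u, v) \<in> edges T"
  then show ?thesis by (simp add: mv_hub badj_hh)
next
  fix u v \<sigma> i j
  assume h: "p = (u, Some (\<sigma>, i))" "q = (v, Some (\<sigma>, j))" "(u, v) \<in> edges T" "\<sigma> \<in> autset T"
    "1 \<le> i" "i < M" "1 \<le> j" "j < M" "i \<le> Suc j" "j \<le> Suc i"
  have ci: "i \<noteq> c \<sigma>" "j \<noteq> c \<sigma>" using np nq h by auto
  have vu: "(v, u) \<in> edges T" using sym_edgesT[OF wf h(3)] .
  show ?thesis
  proof (cases "i < c \<sigma>")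
    case True
    then have Tj: "j < c \<sigma>" using h(9,10) ci by auto
    define a where "a = min i s"
    define b where "b = min j t"
    have ab: "a \<le> Suc b" "b \<le> Suc a" using min_close[of i j s t] h(9,10) st unfolding a_def b_def by auto
    have aM: "a < M" "b < M" using h unfolding a_def b_def by auto
    have mp: "mv M c s p = (if a = 0 then (u, None) else (u, Some (\<sigma>, a)))"
      unfolding a_def h(1) by (rule mv_lower[of i c \<sigma> M s u, OF True])
    have mq: "mv M c t q = (if b = 0 then (v, None) else (v, Some (\<sigma>, b)))"
      unfolding b_def h(2) by (rule mv_lower[of j c \<sigma> M t v, OF Tj])
    show ?thesis
    proof (cases "a = 0"; cases "b = 0")
      assume "a = 0" "b = 0" then show ?thesis using mp mq h by (simp add: badj_hh)
    next
      assume "a = 0" "b \<noteq> 0" then have "b = 1" using ab by simp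
      then show ?thesis using mp mq h aM \<open>a = 0\<close> by (simp add: badj_h1 badj_h1')
    next
      assume "a \<noteq> 0" "b = 0" then have "a = 1" using ab by simp
      then show ?thesis using mp mq h aM vu \<open>b = 0\<close> by (simp add: badj_1h badj_1h')
    next
      assume "a \<noteq> 0" "b \<noteq> 0" then show ?thesis using mp mq h aM ab by (simp add: badj_ll)
    qed
  next
    case False
    then have Fj: "\<not> j < c \<sigma>" using h(9,10) ci by auto
    have suv: "(\<sigma> u, \<sigma> v) \<in> edges T" using autset_hom[OF h(4) h(3)] .
    define a where "a = min (M - i) s"
    define b where "b = min (M - j) t"
    have ab: "a \<le> Suc b" "b \<le> Suc a" using min_close[of "M - i" "M - j" s t] h(9,10) st unfolding a_def b_def by auto
    have aM: "a \<le> M - i" "b \<le> M - j" unfolding a_def b_def by auto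
    have mp: "mv M c s p = (if a = 0 then (\<sigma> u, None) else (u, Some (\<sigma>, M - a)))"
      unfolding a_def h(1) by (rule mv_upper[of i c \<sigma> M s u, OF False])
    have mq: "mv M c t q = (if b = 0 then (\<sigma> v, None) else (v, Some (\<sigma>, M - b)))"
      unfolding b_def h(2) by (rule mv_upper[of j c \<sigma> M t v, OF Fj])
    show ?thesis
    proof (cases "a = 0"; cases "b = 0")
      assume "a = 0" "b = 0" then show ?thesis using mp mq suv by (simp add: badj_hh)
    next
      assume "a = 0" "b \<noteq> 0" then have "b = 1" using ab by simp
      then show ?thesis using mp mq h vu \<open>a = 0\<close> by (simp add: badj_hM badj_hM')
    next
      assume "a \<noteq> 0" "b = 0" then have "a = 1" using ab by simp
      then show ?thesis using mp mq h \<open>b = 0\<close> by (simp add: badj_Mh badj_Mh')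
    next
      assume "a \<noteq> 0" "b \<noteq> 0" then show ?thesis using mp mq h aM ab by (simp add: badj_ll)
    qed
  qed
next
  fix u v \<sigma> assume h: "p = (u, None)" "q = (v, Some (\<sigma>, 1))" "(u, v) \<in> edges T" "\<sigma> \<in> autset T" "1 < M"
  have "c \<sigma> \<noteq> 1" using nq[of \<sigma>] h(2) by auto
  then have "1 < c \<sigma>" using c[of \<sigma>] by linarith
  then have mq: "mv M c t q = (if min 1 t = 0 then (v, None) else (v, Some (\<sigma>, 1)))"
    using mv_lower[of 1 c \<sigma>] h(2) by (simp add: min_def)
  show ?thesis using h mq by (auto simp: mv_hub badj_hh badj_h1 badj_h1')
next
  fix u v \<sigma> assume h: "p = (v, Some (\<sigma>, 1))" "q = (u, None)" "(u, v) \<in> edges T" "\<sigma> \<in> autset T" "1 < M"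
  have "c \<sigma> \<noteq> 1" using np[of \<sigma>] h(1) by auto
  then have "1 < c \<sigma>" using c[of \<sigma>] by linarith
  then have mp: "mv M c s p = (if min 1 s = 0 then (v, None) else (v, Some (\<sigma>, 1)))"
    using mv_lower[of 1 c \<sigma>] h(1) by (simp add: min_def)
  have vu: "(v, u) \<in> edges T" using sym_edgesT[OF wf h(3)] .
  show ?thesis using h mp vu by (auto simp: mv_hub badj_hh badj_1h badj_1h')
next
  fix u v \<sigma> assume h: "p = (u, Some (\<sigma>, M - 1))" "q = (\<sigma> v, None)" "(u, v) \<in> edges T" "\<sigma> \<in> autset T" "1 < M"
  have "c \<sigma> \<noteq> M - 1" using np[of \<sigma>] h(1) by auto
  then have "c \<sigma> < M - 1" using c[of \<sigma>] by linarith
  then have mp: "mv M c s p = (if min 1 s = 0 then (\<sigma> u, None) else (u, Some (\<sigma>, M - 1)))"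
    using mv_upper[of "M - 1" c \<sigma>] h(1,5) by (simp add: min_def)
  have "(\<sigma> u, \<sigma> v) \<in> edges T" using autset_hom[OF h(4) h(3)] .
  then show ?thesis using h mp by (auto simp: mv_hub badj_hh badj_Mh badj_Mh')
next
  fix u v \<sigma> assume h: "p = (\<sigma> v, None)" "q = (u, Some (\<sigma>, M - 1))" "(u, v) \<in> edges T" "\<sigma> \<in> autset T" "1 < M"
  have "c \<sigma> \<noteq> M - 1" using nq[of \<sigma>] h(2) by auto
  then have "c \<sigma> < M - 1" using c[of \<sigma>] by linarith
  then have mq: "mv M c t q = (if min 1 t = 0 then (\<sigma> u, None) else (u, Some (\<sigma>, M - 1)))"
    using mv_upper[of "M - 1" c \<sigma>] h(2,5) by (simp add: min_def)
  have "(\<sigma> v, \<sigma> u) \<in> edges T" using autset_hom[OF h(4) sym_edgesT[OF wf h(3)]] .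
  then show ?thesis using h mq by (auto simp: mv_hub badj_hh badj_hM badj_hM')
qed

lemma bgraph_verts: "verts (bgraph T M) = bverts T M"
  by (simp add: bgraph_def verts_def)
lemma bgraph_edges: "edges (bgraph T M) = {(p, q). badj T M p q}"
  by (simp add: bgraph_def edges_def)

lemma mv_vert:
  assumes "p \<in> bverts T M" shows "mv M c t p \<in> bverts T M"
proof -
  obtain u L where p: "p = (u, L)" by force
  show ?thesis
  proof (cases L)
    case None then show ?thesis using assms p by (simp add: mv_def)
  next
    case (Some a)
    then obtain \<sigma> i where a: "L = Some (\<sigma>, i)" by force
    have h: "u \<in> verts T" "\<sigma> \<in> autset T" "1 \<le> i" "i < M" using assms p a by (auto simp: bverts_def)
    have "\<sigma> u \<in> verts T" using autset_vert[OF h(2,1)] .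
    then show ?thesis using h p a by (auto simp: mv_def bverts_def min_def)
  qed
qed

lemma mv_M: assumes "p \<in> bverts T M" shows "mv M c M p = p"
proof -
  obtain u L where p: "p = (u, L)" by force
  show ?thesis
  proof (cases L)
    case None then show ?thesis using p by (simp add: mv_def)
  next
    case (Some a)
    then obtain \<sigma> i where a: "L = Some (\<sigma>, i)" by force
    have h: "1 \<le> i" "i < M" using assms p a by (auto simp: bverts_def)
    then show ?thesis using p a by (auto simp: mv_def min_def)
  qed
qed

lemma mv_0: "mv M c 0 p = (fst (mv M c 0 p), None)"
  unfolding mv_def by (auto split: option.splits prod.splits)

lemma badj_hub_inv: "badj T M (a, None) (b, None) \<Longrightarrow> (a, b) \<in> edges T"
  unfolding badj_def by auto

definition hv :: "nat \<Rightarrow> ('a \<Rightarrow> 'a) \<Rightarrow> nat \<Rightarrow> 'a \<Rightarrow> 'a bv" where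
  "hv M e j x = (if j = 0 then (x, None) else if j < M then (x, Some (e, j)) else (e x, None))"

lemma hv_adj:
  assumes wf: "wf_graph T" and xy: "(x, y) \<in> edges T" and e: "e \<in> autset T" and M: "2 \<le> M"
    and j: "j \<le> M" "j' \<le> M" "j \<le> Suc j'" "j' \<le> Suc j"
  shows "badj T M (hv M e j x) (hv M e j' y)"
proof -
  have yx: "(y, x) \<in> edges T" using sym_edgesT[OF wf xy] .
  have exy: "(e x, e y) \<in> edges T" using autset_hom[OF e xy] .
  consider "j = 0" "j' = 0" | "j = 0" "j' = 1" | "j = 1" "j' = 0"
    | "1 \<le> j" "j < M" "1 \<le> j'" "j' < M" | "j = M" "j' = M" | "j = M" "j' = M - 1" | "j = M - 1" "j' = M"
    using j M by linarith
  then show ?thesis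
  proof cases
    case 1 then show ?thesis using xy by (simp add: hv_def badj_hh)
  next
    case 2 then show ?thesis using xy e M by (simp add: hv_def badj_h1')
  next
    case 3 then show ?thesis using yx e M by (simp add: hv_def badj_1h')
  next
    case 4 then show ?thesis using xy e j by (simp add: hv_def badj_ll)
  next
    case 5 then show ?thesis using exy M by (simp add: hv_def badj_hh)
  next
    case 6 then show ?thesis using yx e M badj_hM'[of y x T e M] by (simp add: hv_def)
  next
    case 7 then show ?thesis using xy e M badj_Mh'[of x y T e M] by (simp add: hv_def)
  qed
qed

lemma hv_vert: "x \<in> verts T \<Longrightarrow> e \<in> autset T \<Longrightarrow> hv M e j x \<in> bverts T M"
  using autset_vert[of e T x] by (auto simp: hv_def bverts_def)

lemma bundle_connected:
  assumes wf: "wf_graph T" and fin: "finite (verts T)"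
    and endo: "\<forall>g. graph_hom T T g \<longrightarrow> graph_aut T g" and M: "card (verts T) + 2 \<le> M"
  shows "hom_connected T (bgraph T M)"
proof -
  let ?V = "verts T"
  let ?G = "bgraph T M"
  let ?R = "hom_adj T ?G"
  have ET: "\<And>x y. (x, y) \<in> edges T \<Longrightarrow> x \<in> ?V \<and> y \<in> ?V" using wf unfolding wf_graph_def by auto
  have symR: "\<And>a b. (a, b) \<in> ?R\<^sup>* \<Longrightarrow> (b, a) \<in> ?R\<^sup>*"
    using sym_rtrancl[OF sym_hom_adj] by (meson symD)
  define \<iota> where "\<iota> = restrict (\<lambda>x. (x, None :: (('a \<Rightarrow> 'a) \<times> nat) option)) ?V"
  have \<iota>_hom: "\<iota> \<in> hom_vertices T ?G"
    unfolding hom_vertices_def graph_hom_def bgraph_verts bgraph_edges \<iota>_def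
    using ET by (auto simp: bverts_def badj_hh)
  have key: "(\<iota>, g) \<in> ?R\<^sup>*" if g: "g \<in> hom_vertices T ?G" for g
  proof -
    have gext: "g \<in> extensional ?V" using g by (simp add: hom_vertices_def)
    have gv: "\<And>x. x \<in> ?V \<Longrightarrow> g x \<in> bverts T M"
      using g by (auto simp: hom_vertices_def graph_hom_def bgraph_verts)
    have ge: "\<And>x y. (x, y) \<in> edges T \<Longrightarrow> badj T M (g x) (g y)"
      using g by (auto simp: hom_vertices_def graph_hom_def bgraph_edges)
    define lv where "lv x = (case snd (g x) of None \<Rightarrow> 0 | Some (\<sigma>', j) \<Rightarrow> j)" for x
    have ex_c: "\<exists>j. 1 \<le> j \<and> j < M \<and> (\<forall>x\<in>?V. snd (g x) \<noteq> Some (\<sigma>, j))" for \<sigma>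
    proof -
      have "card (lv ` ?V) \<le> card ?V" by (rule card_image_le[OF fin])
      moreover have "card {1..<M} = M - 1" by simp
      ultimately have "\<not> {1..<M} \<subseteq> lv ` ?V"
        using card_mono[OF finite_imageI[OF fin], of "{1..<M}" lv] M by linarith
      then obtain j where j: "j \<in> {1..<M}" "j \<notin> lv ` ?V" by blast
      have "\<forall>x\<in>?V. snd (g x) \<noteq> Some (\<sigma>, j)"
      proof
        fix x assume x: "x \<in> ?V"
        show "snd (g x) \<noteq> Some (\<sigma>, j)"
        proof
          assume "snd (g x) = Some (\<sigma>, j)"
          then have "lv x = j" by (simp add: lv_def)
          then show False using j x by blast
        qed
      qed
      then show ?thesis using j by auto
    qed
    define c where "c \<sigma> = (SOME j. 1 \<le> j \<and> j < M \<and> (\<forall>x\<in>?V. snd (g x) \<noteq> Some (\<sigma>, j)))" for \<sigma>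
    have cprop: "1 \<le> c \<sigma> \<and> c \<sigma> < M \<and> (\<forall>x\<in>?V. snd (g x) \<noteq> Some (\<sigma>, c \<sigma>))" for \<sigma>
      unfolding c_def by (rule someI_ex[OF ex_c])
    have c: "\<And>\<sigma>. 1 \<le> c \<sigma> \<and> c \<sigma> < M" using cprop by blast
    have cn: "\<And>x \<sigma>. x \<in> ?V \<Longrightarrow> snd (g x) \<noteq> Some (\<sigma>, c \<sigma>)" using cprop by blast
    define R where "R t = restrict (\<lambda>x. mv M c t (g x)) ?V" for t
    have mixhom: "restrict (\<lambda>x. mv M c (if x \<in> S then t else Suc t) (g x)) ?V \<in> hom_vertices T ?G" for S t
      unfolding hom_vertices_def graph_hom_def bgraph_verts bgraph_edges
    proof (intro CollectI conjI ballI)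
      fix x assume "x \<in> ?V"
      then show "restrict (\<lambda>x. mv M c (if x \<in> S then t else Suc t) (g x)) ?V x \<in> bverts T M"
        using mv_vert[OF gv] by simp
    next
      fix xy assume xy: "xy \<in> edges T"
      obtain x y where xy': "xy = (x, y)" by force
      have xyV: "x \<in> ?V" "y \<in> ?V" using ET xy xy' by auto
      have "badj T M (mv M c (if x \<in> S then t else Suc t) (g x)) (mv M c (if y \<in> S then t else Suc t) (g y))"
        by (rule mv_adj[OF wf ge[OF xy[unfolded xy']] c cn[OF xyV(1)] cn[OF xyV(2)]]) auto
      then show "case xy of (u, v) \<Rightarrow> (restrict (\<lambda>x. mv M c (if x \<in> S then t else Suc t) (g x)) ?V u,
          restrict (\<lambda>x. mv M c (if x \<in> S then t else Suc t) (g x)) ?V v) \<in> {(p, q). badj T M p q}"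
        using xy' xyV by simp
    qed simp
    have Rhom: "R t \<in> hom_vertices T ?G" for t
    proof -
      have "R t = restrict (\<lambda>x. mv M c (if x \<in> UNIV then t else Suc t) (g x)) ?V"
        unfolding R_def by simp
      then show ?thesis using mixhom[of UNIV t] by simp
    qed
    have step: "(R (Suc t), R t) \<in> ?R\<^sup>*" for t
    proof (rule mixing_path[OF fin])
      show "R (Suc t) \<in> extensional ?V" "R t \<in> extensional ?V" unfolding R_def by simp_all
      fix S
      have "mixf ?V S (R (Suc t)) (R t) = restrict (\<lambda>x. mv M c (if x \<in> S then t else Suc t) (g x)) ?V"
        unfolding mixf_def R_def by (auto simp: fun_eq_iff)
      then show "mixf ?V S (R (Suc t)) (R t) \<in> hom_vertices T ?G" using mixhom by simp
    qed
    have down: "(R t, R 0) \<in> ?R\<^sup>*" for t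
    proof (induction t)
      case 0 then show ?case by simp
    next
      case (Suc t) then show ?case using step[of t] by (meson rtrancl_trans)
    qed
    have RM: "R M = g"
    proof (rule extensionalityI[OF _ gext])
      show "R M \<in> extensional ?V" unfolding R_def by simp
      fix x assume "x \<in> ?V" then show "R M x = g x" unfolding R_def using mv_M[OF gv] by simp
    qed
    have gR0: "(g, R 0) \<in> ?R\<^sup>*" using down[of M] RM by simp
    define e where "e = restrict (\<lambda>x. fst (mv M c 0 (g x))) ?V"
    have R0: "R 0 = restrict (\<lambda>x. (e x, None)) ?V"
      unfolding R_def e_def using mv_0[of M c "g _"] by (auto simp: fun_eq_iff)
    have ehom: "graph_hom T T e" unfolding graph_hom_def
    proof (intro conjI ballI)
      fix x assume x: "x \<in> ?V"
      have "R 0 x \<in> bverts T M" using Rhom[of 0] x by (auto simp: hom_vertices_def graph_hom_def bgraph_verts)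
      then show "e x \<in> ?V" using x R0 by (auto simp: bverts_def)
    next
      fix xy assume xy: "xy \<in> edges T"
      obtain x y where xy': "xy = (x, y)" by force
      have xyV: "x \<in> ?V" "y \<in> ?V" using ET xy xy' by auto
      have "badj T M (R 0 x) (R 0 y)" using Rhom[of 0] xy xy'
        by (auto simp: hom_vertices_def graph_hom_def bgraph_edges)
      then have "badj T M (e x, None) (e y, None)" using R0 xyV by simp
      then show "case xy of (u, v) \<Rightarrow> (e u, e v) \<in> edges T" using xy' badj_hub_inv by simp
    qed
    have eA: "e \<in> autset T" using endo ehom unfolding autset_def e_def by simp
    define H where "H i = restrict (hv M e i) ?V" for i
    have M2: "2 \<le> M" using M by simp
    have Hstep: "(H i, H (Suc i)) \<in> ?R\<^sup>*" if i: "i < M" for i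
    proof (rule mixing_path[OF fin])
      show "H i \<in> extensional ?V" "H (Suc i) \<in> extensional ?V" unfolding H_def by simp_all
      fix S
      show "mixf ?V S (H i) (H (Suc i)) \<in> hom_vertices T ?G"
        unfolding hom_vertices_def graph_hom_def bgraph_verts bgraph_edges mixf_def H_def
      proof (intro CollectI conjI ballI)
        fix x assume "x \<in> ?V"
        then show "restrict (\<lambda>x. if x \<in> S then restrict (hv M e (Suc i)) ?V x else restrict (hv M e i) ?V x) ?V x \<in> bverts T M"
          using hv_vert[OF _ eA] by simp
      next
        fix xy assume xy: "xy \<in> edges T"
        obtain x y where xy': "xy = (x, y)" by force
        have xyV: "x \<in> ?V" "y \<in> ?V" using ET xy xy' by auto
        have "badj T M (hv M e (if x \<in> S then Suc i else i) x) (hv M e (if y \<in> S then Suc i else i) y)"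
          by (rule hv_adj[OF wf xy[unfolded xy'] eA M2]) (use i in auto)
        then show "case xy of (u, v) \<Rightarrow>
          (restrict (\<lambda>x. if x \<in> S then restrict (hv M e (Suc i)) ?V x else restrict (hv M e i) ?V x) ?V u,
           restrict (\<lambda>x. if x \<in> S then restrict (hv M e (Suc i)) ?V x else restrict (hv M e i) ?V x) ?V v)
          \<in> {(p, q). badj T M p q}"
          using xy' xyV by (cases "x \<in> S"; cases "y \<in> S"; simp)
      qed simp
    qed
    have up: "(H 0, H i) \<in> ?R\<^sup>*" if "i \<le> M" for i
      using that
    proof (induction i)
      case 0 then show ?case by simp
    next
      case (Suc i) then show ?case using Hstep[of i] by (meson Suc_leD Suc_le_lessD rtrancl_trans)
    qed
    have H0: "H 0 = \<iota>" unfolding H_def \<iota>_def by (rule restrict_ext) (simp add: hv_def)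
    have HM: "H M = R 0" unfolding H_def R0 by (rule restrict_ext) (use M2 in \<open>simp add: hv_def\<close>)
    have "(H 0, H M) \<in> ?R\<^sup>*" using up[of M] by simp
    then show ?thesis using H0 HM symR[OF gR0] by (metis rtrancl_trans)
  qed
  show ?thesis unfolding hom_connected_def
  proof (intro conjI ballI)
    show "hom_vertices T ?G \<noteq> {}" using \<iota>_hom by blast
    fix f g assume "f \<in> hom_vertices T ?G" "g \<in> hom_vertices T ?G"
    then show "(f, g) \<in> ?R\<^sup>*" using key symR by (meson rtrancl_trans)
  qed
qed

lemma near_col:
  assumes fin: "finite (verts T)"
    and f: "f \<in> hom_vertices T (complete_graph r)" and f': "f' \<in> hom_vertices T (complete_graph r)"
    and ff: "f = f' \<or> (f, f') \<in> hom_adj T (complete_graph r)"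
    and uv: "(u, v) \<in> edges T"
  shows "f u \<noteq> f' v"
proof
  assume eq: "f u = f' v"
  have hf: "(f u, f v) \<in> edges (complete_graph r)" "(f' u, f' v) \<in> edges (complete_graph r)"
    using f f' uv unfolding hom_vertices_def graph_hom_def by auto
  then have ne: "f u \<noteq> f v" "f' u \<noteq> f' v" by (auto simp: complete_graph_def edges_def)
  show False
  proof (cases "f = f'")
    case True then show False using eq ne by simp
  next
    case False
    then have adj: "(f, f') \<in> hom_adj T (complete_graph r)" using ff by simp
    have uvV: "u \<in> verts T" "v \<in> verts T"
    proof -
      have "v \<in> verts T"
      proof (rule ccontr)
        assume "v \<notin> verts T"
        then have "f v = undefined" "f' v = undefined" using f f' by (auto simp: hom_vertices_def extensional_def)
        then show False using eq ne by simp
      qed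
      moreover have "u \<in> verts T"
      proof (rule ccontr)
        assume "u \<notin> verts T"
        then have "f u = undefined" "f' u = undefined" using f f' by (auto simp: hom_vertices_def extensional_def)
        then show False using eq ne by simp
      qed
      ultimately show "u \<in> verts T" "v \<in> verts T" by auto
    qed
    let ?D = "{x \<in> verts T. f x \<noteq> f' x}"
    have "card ?D = 1" using adj by (simp add: hom_adj_def)
    then obtain w where D: "?D = {w}" using card_1_singletonE by blast
    have "u \<in> ?D" using eq ne uvV by auto
    moreover have "v \<in> ?D" using eq ne uvV by auto
    ultimately have "u = v" using D by auto
    then show False using ne by simp
  qed
qed

lemma badj_sym: assumes "wf_graph T" "badj T M p q" shows "badj T M q p"
  using assms(2) unfolding badj_def[of T M p q]
proof (elim disjE exE conjE)
  fix u v assume "p = (u, None)" "q = (v, None)" "(u, v) \<in> edges T"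
  then show ?thesis using sym_edgesT[OF assms(1)] by (simp add: badj_hh)
next
  fix u v \<sigma> i j assume h: "p = (u, Some (\<sigma>, i))" "q = (v, Some (\<sigma>, j))" "(u, v) \<in> edges T" "\<sigma> \<in> autset T"
    "1 \<le> i" "i < M" "1 \<le> j" "j < M" "i \<le> Suc j" "j \<le> Suc i"
  then show ?thesis using sym_edgesT[OF assms(1) h(3)] by (simp add: badj_ll)
next
  fix u v \<sigma> assume h: "p = (u, None)" "q = (v, Some (\<sigma>, 1))" "(u, v) \<in> edges T" "\<sigma> \<in> autset T" "1 < M"
  then show ?thesis by (simp add: badj_1h badj_1h')
next
  fix u v \<sigma> assume h: "p = (v, Some (\<sigma>, 1))" "q = (u, None)" "(u, v) \<in> edges T" "\<sigma> \<in> autset T" "1 < M"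
  then show ?thesis by (simp add: badj_h1 badj_h1')
next
  fix u v \<sigma> assume h: "p = (u, Some (\<sigma>, M - 1))" "q = (\<sigma> v, None)" "(u, v) \<in> edges T" "\<sigma> \<in> autset T" "1 < M"
  then show ?thesis using badj_hM[of u v T \<sigma> M] by simp
next
  fix u v \<sigma> assume h: "p = (\<sigma> v, None)" "q = (u, Some (\<sigma>, M - 1))" "(u, v) \<in> edges T" "\<sigma> \<in> autset T" "1 < M"
  then show ?thesis using badj_Mh[of u v T \<sigma> M] by simp
qed

lemma badj_verts: assumes "wf_graph T" "badj T M p q" shows "p \<in> bverts T M \<and> q \<in> bverts T M"
proof -
  have ET: "\<And>x y. (x, y) \<in> edges T \<Longrightarrow> x \<in> verts T \<and> y \<in> verts T"
    using assms(1) unfolding wf_graph_def by auto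
  show ?thesis using assms(2) unfolding badj_def[of T M p q]
  proof (elim disjE exE conjE)
    fix u v \<sigma> assume h: "p = (u, Some (\<sigma>, M - 1))" "q = (\<sigma> v, None)" "(u, v) \<in> edges T" "\<sigma> \<in> autset T" "1 < M"
    then show ?thesis using ET[OF h(3)] autset_vert[OF h(4), of v] by (auto simp: bverts_def)
  next
    fix u v \<sigma> assume h: "p = (\<sigma> v, None)" "q = (u, Some (\<sigma>, M - 1))" "(u, v) \<in> edges T" "\<sigma> \<in> autset T" "1 < M"
    then show ?thesis using ET[OF h(3)] autset_vert[OF h(4), of v] by (auto simp: bverts_def)
  qed (use ET in \<open>auto simp: bverts_def\<close>)
qed

lemma bgraph_wf: assumes wf: "wf_graph T" shows "wf_graph (bgraph T M)"
  unfolding wf_graph_def[of "bgraph T M"] bgraph_verts bgraph_edges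
proof
  show "{(p, q). badj T M p q} \<subseteq> bverts T M \<times> bverts T M"
  proof
    fix pq assume "pq \<in> {(p, q). badj T M p q}"
    then obtain p q where "pq = (p, q)" "badj T M p q" by auto
    then show "pq \<in> bverts T M \<times> bverts T M" using badj_verts[OF wf] by auto
  qed
  show "sym {(p, q). badj T M p q}"
  proof (rule symI)
    fix p q assume "(p, q) \<in> {(p, q). badj T M p q}"
    then show "(q, p) \<in> {(p, q). badj T M p q}" using badj_sym[OF wf] by auto
  qed
qed

lemma autset_finite: "finite (verts T) \<Longrightarrow> finite (autset T)"
proof -
  assume fin: "finite (verts T)"
  have "autset T \<subseteq> PiE (verts T) (\<lambda>_. verts T)"
    unfolding autset_def graph_aut_def graph_hom_def PiE_def Pi_def by auto
  then show ?thesis using finite_PiE[OF fin, of "\<lambda>_. verts T"] fin finite_subset by blast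
qed

lemma bverts_finite: assumes "finite (verts T)" shows "finite (bverts T M)"
proof -
  have "finite (autset T \<times> {1..<M})" using autset_finite[OF assms] by simp
  then have "finite ({None} \<union> Some ` (autset T \<times> {1..<M}))" by simp
  then show ?thesis unfolding bverts_def using assms by simp
qed

theorem theorem3p1:
  fixes T :: "'a graph"
  assumes "wf_graph T" and "finite (verts T)"
    and "\<forall>g. graph_hom T T g \<longrightarrow> graph_aut T g"
    and "\<exists>r. chromatic_number T = enat r \<and>
           (\<exists>C. hom_path_component T (complete_graph r) C \<and> aut_invariant T C)"
  shows "\<exists>G :: nat graph. wf_graph G \<and> chromatic_number G = chromatic_number T \<and>
           hom_connected T G"
proof -
  note wf = assms(1) and fin = assms(2) and endo = assms(3)
  obtain r C where r: "chromatic_number T = enat r" and pc: "hom_path_component T (complete_graph r) C"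
    and inv: "aut_invariant T C" using assms(4) by blast
  let ?K = "complete_graph r"
  let ?RK = "hom_adj T ?K"
  let ?V = "verts T"
  obtain f1 where f1: "f1 \<in> hom_vertices T ?K" and C: "C = {g. (f1, g) \<in> ?RK\<^sup>*}"
    using pc unfolding hom_path_component_def by blast
  define A where "A = autset T"
  have Afin: "finite A" unfolding A_def using autset_finite[OF fin] .
  have pathex: "\<exists>np :: nat \<times> (nat \<Rightarrow> 'a \<Rightarrow> nat). (snd np) 0 = f1 \<and> (snd np) (fst np) = restrict (f1 \<circ> \<sigma>) ?V
      \<and> (\<forall>i<fst np. ((snd np) i, (snd np) (Suc i)) \<in> ?RK)" if s: "\<sigma> \<in> A" for \<sigma>
  proof -
    have "graph_aut T \<sigma>" using s by (simp add: A_def autset_def)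
    moreover have "f1 \<in> C" using C by simp
    ultimately have "restrict (f1 \<circ> \<sigma>) ?V \<in> C" using inv unfolding aut_invariant_def by blast
    then have "(f1, restrict (f1 \<circ> \<sigma>) ?V) \<in> ?RK\<^sup>*" using C by simp
    then obtain n where "(f1, restrict (f1 \<circ> \<sigma>) ?V) \<in> ?RK ^^ n" using rtrancl_power by blast
    then obtain p where "p 0 = f1" "p n = restrict (f1 \<circ> \<sigma>) ?V" "\<forall>i<n. (p i, p (Suc i)) \<in> ?RK"
      using relpow_fun_conv by metis
    then show ?thesis by (intro exI[of _ "(n, p)"]) simp
  qed
  have "\<forall>\<sigma>\<in>A. \<exists>np :: nat \<times> (nat \<Rightarrow> 'a \<Rightarrow> nat). (snd np) 0 = f1 \<and> (snd np) (fst np) = restrict (f1 \<circ> \<sigma>) ?V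
      \<and> (\<forall>i<fst np. ((snd np) i, (snd np) (Suc i)) \<in> ?RK)" using pathex by blast
  from bchoice[OF this] obtain NP where NP': "\<forall>\<sigma>\<in>A. (snd (NP \<sigma>)) 0 = f1 \<and> (snd (NP \<sigma>)) (fst (NP \<sigma>)) = restrict (f1 \<circ> \<sigma>) ?V
      \<and> (\<forall>i<fst (NP \<sigma>). ((snd (NP \<sigma>)) i, (snd (NP \<sigma>)) (Suc i)) \<in> ?RK)" by blast
  then have NP: "\<And>\<sigma>. \<sigma> \<in> A \<Longrightarrow> (snd (NP \<sigma>)) 0 = f1 \<and> (snd (NP \<sigma>)) (fst (NP \<sigma>)) = restrict (f1 \<circ> \<sigma>) ?V
      \<and> (\<forall>i<fst (NP \<sigma>). ((snd (NP \<sigma>)) i, (snd (NP \<sigma>)) (Suc i)) \<in> ?RK)" by blast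
  define N where "N \<sigma> = fst (NP \<sigma>)" for \<sigma>
  define P where "P \<sigma> = snd (NP \<sigma>)" for \<sigma>
  define M where "M = (\<Sum>\<sigma>\<in>A. N \<sigma>) + card ?V + 2"
  define k where "k \<sigma> i = P \<sigma> (min i (N \<sigma>))" for \<sigma> i
  have NM: "N \<sigma> \<le> M" if "\<sigma> \<in> A" for \<sigma>
    using member_le_sum[OF that, of N, OF _ Afin] unfolding M_def by simp
  have P0: "P \<sigma> 0 = f1" and PN: "P \<sigma> (N \<sigma>) = restrict (f1 \<circ> \<sigma>) ?V"
    and Pst: "\<And>i. i < N \<sigma> \<Longrightarrow> (P \<sigma> i, P \<sigma> (Suc i)) \<in> ?RK" if "\<sigma> \<in> A" for \<sigma>
    using NP[OF that] unfolding N_def P_def by auto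
  have Phom: "P \<sigma> i \<in> hom_vertices T ?K" if "\<sigma> \<in> A" "i \<le> N \<sigma>" for \<sigma> i
    using that(2)
  proof (induction i)
    case 0 then show ?case using P0[OF that(1)] f1 by simp
  next
    case (Suc i) then show ?case using Pst[OF that(1), of i] by (simp add: hom_adj_def)
  qed
  have k0: "k \<sigma> 0 = f1" if "\<sigma> \<in> A" for \<sigma> using P0[OF that] by (simp add: k_def)
  have kM: "k \<sigma> M = restrict (f1 \<circ> \<sigma>) ?V" if "\<sigma> \<in> A" for \<sigma>
    using PN[OF that] NM[OF that] by (simp add: k_def min_def)
  have khom: "k \<sigma> i \<in> hom_vertices T ?K" if "\<sigma> \<in> A" for \<sigma> i
    using Phom[OF that] by (simp add: k_def)
  have kst: "k \<sigma> i = k \<sigma> (Suc i) \<or> (k \<sigma> i, k \<sigma> (Suc i)) \<in> ?RK" if "\<sigma> \<in> A" for \<sigma> i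
  proof (cases "i < N \<sigma>")
    case True then show ?thesis using Pst[OF that True] by (simp add: k_def min_def)
  next
    case False then show ?thesis by (simp add: k_def min_def)
  qed
  have kne: "k \<sigma> i u \<noteq> k \<sigma> (Suc i) v" if "\<sigma> \<in> A" "(u, v) \<in> edges T" for \<sigma> i u v
    using near_col[OF fin khom[OF that(1)] khom[OF that(1)] kst[OF that(1)] that(2)] .
  have kne0: "k \<sigma> i u \<noteq> k \<sigma> i v" if "\<sigma> \<in> A" "(u, v) \<in> edges T" for \<sigma> i u v
    using near_col[OF fin khom[OF that(1)] khom[OF that(1)] _ that(2)] by simp
  have f1ne: "f1 u \<noteq> f1 v" if "(u, v) \<in> edges T" for u v
    using near_col[OF fin f1 f1 _ that] by simp
  have M2: "2 \<le> M" unfolding M_def by simp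
  have Mv: "card ?V + 2 \<le> M" unfolding M_def by simp
  define col where "col p = (case p of (u, None) \<Rightarrow> f1 u | (u, Some (\<sigma>, i)) \<Rightarrow> k \<sigma> i u)" for p :: "'a bv"
  have ET: "\<And>x y. (x, y) \<in> edges T \<Longrightarrow> x \<in> ?V \<and> y \<in> ?V" using wf unfolding wf_graph_def by auto
  have symT: "\<And>x y. (x, y) \<in> edges T \<Longrightarrow> (y, x) \<in> edges T" using sym_edgesT[OF wf] .
  have colv: "col p < r" if "p \<in> bverts T M" for p
  proof -
    have vK: "\<And>g x. g \<in> hom_vertices T ?K \<Longrightarrow> x \<in> ?V \<Longrightarrow> g x < r"
      by (auto simp: hom_vertices_def graph_hom_def complete_graph_def verts_def)
    show ?thesis using that vK[OF f1] vK[OF khom] by (auto simp: bverts_def col_def A_def)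
  qed
  have colne: "col p \<noteq> col q" if "badj T M p q" for p q
    using that unfolding badj_def[of T M p q]
  proof (elim disjE exE conjE)
    fix u v assume "p = (u, None)" "q = (v, None)" "(u, v) \<in> edges T"
    then show ?thesis using f1ne by (simp add: col_def)
  next
    fix u v \<sigma> i j assume h: "p = (u, Some (\<sigma>, i))" "q = (v, Some (\<sigma>, j))" "(u, v) \<in> edges T" "\<sigma> \<in> autset T"
      "1 \<le> i" "i < M" "1 \<le> j" "j < M" "i \<le> Suc j" "j \<le> Suc i"
    have s: "\<sigma> \<in> A" using h A_def by simp
    consider "j = i" | "j = Suc i" | "i = Suc j" using h(9,10) by linarith
    then show ?thesis
    proof cases
      case 1 then show ?thesis using h kne0[OF s h(3)] by (simp add: col_def)
    next
      case 2 then show ?thesis using h kne[OF s h(3)] by (simp add: col_def)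
    next
      case 3 then show ?thesis using h kne[OF s symT[OF h(3)], of j] by (simp add: col_def)
    qed
  next
    fix u v \<sigma> assume h: "p = (u, None)" "q = (v, Some (\<sigma>, 1))" "(u, v) \<in> edges T" "\<sigma> \<in> autset T" "1 < M"
    then show ?thesis using kne[OF _ h(3), of \<sigma> 0] k0[of \<sigma>] by (simp add: col_def A_def)
  next
    fix u v \<sigma> assume h: "p = (v, Some (\<sigma>, 1))" "q = (u, None)" "(u, v) \<in> edges T" "\<sigma> \<in> autset T" "1 < M"
    then show ?thesis using kne[OF _ h(3), of \<sigma> 0] k0[of \<sigma>] by (simp add: col_def A_def)
  next
    fix u v \<sigma> assume h: "p = (u, Some (\<sigma>, M - 1))" "q = (\<sigma> v, None)" "(u, v) \<in> edges T" "\<sigma> \<in> autset T" "1 < M"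
    have s: "\<sigma> \<in> A" using h A_def by simp
    have "k \<sigma> (M - 1) u \<noteq> k \<sigma> (Suc (M - 1)) v" using kne[OF s h(3)] .
    moreover have "Suc (M - 1) = M" using h(5) by simp
    moreover have "k \<sigma> M v = f1 (\<sigma> v)" using kM[OF s] ET[OF h(3)] by simp
    ultimately show ?thesis using h by (simp add: col_def)
  next
    fix u v \<sigma> assume h: "p = (\<sigma> v, None)" "q = (u, Some (\<sigma>, M - 1))" "(u, v) \<in> edges T" "\<sigma> \<in> autset T" "1 < M"
    have s: "\<sigma> \<in> A" using h A_def by simp
    have "k \<sigma> (M - 1) u \<noteq> k \<sigma> (Suc (M - 1)) v" using kne[OF s h(3)] .
    moreover have "Suc (M - 1) = M" using h(5) by simp
    moreover have "k \<sigma> M v = f1 (\<sigma> v)" using kM[OF s] ET[OF h(3)] by simp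
    ultimately show ?thesis using h by (simp add: col_def)
  qed
  let ?B = "bgraph T M"
  have colhom: "graph_hom ?B ?K col"
    unfolding graph_hom_def bgraph_verts bgraph_edges
  proof (intro conjI ballI)
    fix p assume "p \<in> bverts T M" then show "col p \<in> verts ?K"
      using colv by (simp add: complete_graph_def verts_def)
  next
    fix pq assume "pq \<in> {(p, q). badj T M p q}"
    then obtain p q where pq: "pq = (p, q)" "badj T M p q" by auto
    have "p \<in> bverts T M" "q \<in> bverts T M" using badj_verts[OF wf pq(2)] by auto
    then show "case pq of (u, v) \<Rightarrow> (col u, col v) \<in> edges ?K"
      using pq colv colne[OF pq(2)] by (simp add: complete_graph_def edges_def)
  qed
  have iota: "graph_hom T ?B (\<lambda>x. (x, None))"
    unfolding graph_hom_def bgraph_verts bgraph_edges using ET by (auto simp: bverts_def badj_hh)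
  have chiB: "chromatic_number ?B = chromatic_number T"
    using chromatic_le[OF colhom] chromatic_mono[OF iota] r by simp
  have connB: "hom_connected T ?B" using bundle_connected[OF wf fin endo Mv] .
  have wfB: "wf_graph ?B" using bgraph_wf[OF wf] .
  obtain \<phi> :: "'a bv \<Rightarrow> nat" and n where "\<phi> ` verts ?B = {i. i < n}" "inj_on \<phi> (verts ?B)"
    using finite_imp_inj_to_nat_seg[OF bverts_finite[OF fin, of M]] unfolding bgraph_verts by metis
  then have inj: "inj_on \<phi> (verts ?B)" by simp
  define G where "G = (\<phi> ` verts ?B, (\<lambda>(a, b). (\<phi> a, \<phi> b)) ` edges ?B)"
  have "wf_graph G \<and> chromatic_number G = chromatic_number ?B \<and> (hom_connected T ?B \<longrightarrow> hom_connected T G)"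
    by (rule rename_graph[OF wf wfB inj G_def])
  then show ?thesis using chiB connB by metis
qed

end
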